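(* Let $G$ be a finite simple graph and let $c>0$ and $t>0$ be constants with $t\le c\,\frac{\epsilon(G)}{|G|}$. Then $$Ldyn_t(G)<\frac{c}{c+1}|G|.$$
   Context: For a graph $G$, $|G|$ is its number of vertices and $\epsilon(G)=|E(G)|/|G|$. A threshold assignment is a function $\tau:V(G)\to\{0,1,2,\dots\}$ with $\tau(v)\le deg_G(v)$ for every $v$; its average is $\overline{\tau}=\sum_v\tau(v)/|G|$. A set $D\subseteq V(G)$ is a $\tau$-dynamo if $V(G)$ can be partitioned into $D_0=D,D_1,\dots,D_k$ such that for each $1\le i\le k$, $D_i$ consists of all vertices not in $D_0\cup\dots\cup D_{i-1}$ having at least $\tau(v)$ neighbors in $D_0\cup\dots\cup D_{i-1}$; $dyn_\tau(G)$ is the minimum size of a $\tau$-dynamo. $Ldyn_t(G)=\max\{dyn_\tau(G):\overline{\tau}\le t\}$. *)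

theory Defs
  imports Complex_Main
begin

definition simple_graph :: "'a set \<Rightarrow> 'a set set \<Rightarrow> bool" where
  "simple_graph V E \<longleftrightarrow> finite V \<and>
     (\<forall>e\<in>E. \<exists>u v. u \<in> V \<and> v \<in> V \<and> u \<noteq> v \<and> e = {u, v})"

definition nbrs :: "'a set \<Rightarrow> 'a set set \<Rightarrow> 'a \<Rightarrow> 'a set" where
  "nbrs V E v = {u \<in> V. {u, v} \<in> E}"

definition deg :: "'a set \<Rightarrow> 'a set set \<Rightarrow> 'a \<Rightarrow> nat" where
  "deg V E v = card (nbrs V E v)"

definition eps :: "'a set \<Rightarrow> 'a set set \<Rightarrow> real" where
  "eps V E = real (card E) / real (card V)"

text \<open>Cumulative sets D_0 \<union> ... \<union> D_i of the activation process started from D.\<close>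
fun activated :: "'a set \<Rightarrow> 'a set set \<Rightarrow> ('a \<Rightarrow> nat) \<Rightarrow> 'a set \<Rightarrow> nat \<Rightarrow> 'a set" where
  "activated V E \<tau> D 0 = D"
| "activated V E \<tau> D (Suc i) =
     activated V E \<tau> D i \<union>
     {v \<in> V - activated V E \<tau> D i. card (nbrs V E v \<inter> activated V E \<tau> D i) \<ge> \<tau> v}"

definition is_dynamo :: "'a set \<Rightarrow> 'a set set \<Rightarrow> ('a \<Rightarrow> nat) \<Rightarrow> 'a set \<Rightarrow> bool" where
  "is_dynamo V E \<tau> D \<longleftrightarrow> D \<subseteq> V \<and> (\<exists>k. activated V E \<tau> D k = V)"

definition dyn :: "'a set \<Rightarrow> 'a set set \<Rightarrow> ('a \<Rightarrow> nat) \<Rightarrow> nat" where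
  "dyn V E \<tau> = Min {card D | D. is_dynamo V E \<tau> D}"

definition Ldyn :: "'a set \<Rightarrow> 'a set set \<Rightarrow> real \<Rightarrow> nat" where
  "Ldyn V E t = Max {dyn V E \<tau> | \<tau>. (\<forall>v\<in>V. \<tau> v \<le> deg V E v) \<and>
                      (\<Sum>v\<in>V. real (\<tau> v)) / real (card V) \<le> t}"

end

theory Submission
  imports Defs
begin


lemma act_sub: "D \<subseteq> V \<Longrightarrow> activated V E \<tau> D k \<subseteq> V"
  by (induction k) auto

lemma act_le: "k \<le> l \<Longrightarrow> activated V E \<tau> D k \<subseteq> activated V E \<tau> D l"
proof (induction l)
  case 0 then show ?case by simp
next
  case (Suc l)
  then show ?case by (cases "k = Suc l") auto
qed

lemma act_mono:
  assumes "finite V2" "V1 \<subseteq> V2" "D1 \<subseteq> D2"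
  shows "activated V1 E \<tau> D1 k \<subseteq> activated V2 E \<tau> D2 k"
proof (induction k)
  case 0 then show ?case using assms by simp
next
  case (Suc k)
  show ?case
  proof
    fix v assume v: "v \<in> activated V1 E \<tau> D1 (Suc k)"
    show "v \<in> activated V2 E \<tau> D2 (Suc k)"
    proof (cases "v \<in> activated V2 E \<tau> D2 k")
      case True then show ?thesis by simp
    next
      case False
      with v Suc have v1: "v \<in> V1" "card (nbrs V1 E v \<inter> activated V1 E \<tau> D1 k) \<ge> \<tau> v" by auto
      have "nbrs V1 E v \<inter> activated V1 E \<tau> D1 k \<subseteq> nbrs V2 E v \<inter> activated V2 E \<tau> D2 k"
        using Suc assms(2) by (auto simp: nbrs_def)
      moreover have "finite (nbrs V2 E v \<inter> activated V2 E \<tau> D2 k)"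
        using assms(1) by (auto simp: nbrs_def)
      ultimately have "card (nbrs V2 E v \<inter> activated V2 E \<tau> D2 k) \<ge> \<tau> v"
        using v1 card_mono le_trans by blast
      then show ?thesis using False v1 assms(2) by auto
    qed
  qed
qed

lemma extend_dynamo:
  assumes fin: "finite V" and nl: "\<And>u. {u,u} \<notin> E" and w: "w \<in> V"
    and dy: "is_dynamo (V - {w}) E \<tau> D'"
  shows "is_dynamo V E \<tau> (insert w D')"
    and "\<tau> w \<le> deg V E w \<Longrightarrow> is_dynamo V E \<tau> D'"
proof -
  obtain k where k: "activated (V - {w}) E \<tau> D' k = V - {w}" and D': "D' \<subseteq> V - {w}"
    using dy by (auto simp: is_dynamo_def)
  have s1: "V - {w} \<subseteq> activated V E \<tau> (insert w D') k"
    using act_mono[OF fin, of "V - {w}" D' "insert w D'" E \<tau> k] k by auto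
  have "w \<in> activated V E \<tau> (insert w D') k"
    using act_le[of 0 k V E \<tau> "insert w D'"] by auto
  moreover have "activated V E \<tau> (insert w D') k \<subseteq> V"
    using act_sub[of "insert w D'" V] D' w by auto
  ultimately show "is_dynamo V E \<tau> (insert w D')"
    using s1 D' w unfolding is_dynamo_def by blast
  assume tw: "\<tau> w \<le> deg V E w"
  let ?A = "activated V E \<tau> D' k"
  have s2: "V - {w} \<subseteq> ?A"
    using act_mono[OF fin, of "V - {w}" D' D' E \<tau> k] k by auto
  have nw: "nbrs V E w \<subseteq> V - {w}" using nl by (auto simp: nbrs_def)
  have "nbrs V E w \<inter> ?A = nbrs V E w" using nw s2 by blast
  then have "card (nbrs V E w \<inter> ?A) \<ge> \<tau> w" using tw by (simp add: deg_def)
  then have "w \<in> activated V E \<tau> D' (Suc k)" using w by auto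
  moreover have "?A \<subseteq> activated V E \<tau> D' (Suc k)" by auto
  moreover have "activated V E \<tau> D' (Suc k) \<subseteq> V" using act_sub[of D' V] D' by auto
  ultimately have "activated V E \<tau> D' (Suc k) = V" using s2 by blast
  then show "is_dynamo V E \<tau> D'" using D' unfolding is_dynamo_def by blast
qed



definition H :: "('a \<Rightarrow> nat) \<Rightarrow> 'a \<Rightarrow> nat \<Rightarrow> real" where
  "H \<tau> u k = real (min (\<tau> u) (k+1)) / real (k+1)"

definition gF :: "'a set \<Rightarrow> 'a set set \<Rightarrow> ('a \<Rightarrow> nat) \<Rightarrow> real" where
  "gF V E \<tau> = (\<Sum>u\<in>V. H \<tau> u (deg V E u))"

lemma H_point: "H \<tau> u d + real d * (H \<tau> u d - H \<tau> u (d - 1)) = (if \<tau> u > d then 1 else 0)"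
proof (cases "d = 0")
  case True then show ?thesis by (auto simp: H_def)
next
  case False
  then have "real d * H \<tau> u (d - 1) = real (min (\<tau> u) d)" by (simp add: H_def)
  moreover have "(real d + 1) * H \<tau> u d = real (min (\<tau> u) (d+1))"
    by (simp add: H_def add.commute)
  ultimately show ?thesis by (auto simp: algebra_simps min_def)
qed

lemma nbrs_iff: "nbrs V E u = {w\<in>V. {u,w} \<in> E}"
  by (auto simp: nbrs_def insert_commute)

lemma deg_remove:
  assumes "finite V" "u \<in> V" "u \<noteq> w"
  shows "deg (V - {w}) E u = deg V E u - (if w \<in> V \<and> {u,w} \<in> E then 1 else 0)"
proof -
  have "nbrs (V - {w}) E u = nbrs V E u - {w}" by (auto simp: nbrs_def)
  moreover have "finite (nbrs V E u)" using assms by (auto simp: nbrs_def)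
  ultimately show ?thesis unfolding deg_def by (auto simp: nbrs_iff)
qed

lemma gF_remove:
  assumes fin: "finite V" and nl: "\<And>u. {u,u} \<notin> E" and w: "w \<in> V"
  shows "gF V E \<tau> - gF (V - {w}) E \<tau> = H \<tau> w (deg V E w)
     + (\<Sum>u\<in>V. if {u,w} \<in> E then H \<tau> u (deg V E u) - H \<tau> u (deg V E u - 1) else 0)"
proof -
  have "gF (V - {w}) E \<tau> = (\<Sum>u\<in>V-{w}. H \<tau> u (deg V E u)
      - (if {u,w} \<in> E then H \<tau> u (deg V E u) - H \<tau> u (deg V E u - 1) else 0))"
    unfolding gF_def by (rule sum.cong) (auto simp: deg_remove[OF fin] w)
  also have "\<dots> = (\<Sum>u\<in>V-{w}. H \<tau> u (deg V E u))
      - (\<Sum>u\<in>V-{w}. if {u,w} \<in> E then H \<tau> u (deg V E u) - H \<tau> u (deg V E u - 1) else 0)"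
    by (simp add: sum_subtractf)
  also have "(\<Sum>u\<in>V-{w}. H \<tau> u (deg V E u)) = gF V E \<tau> - H \<tau> w (deg V E w)"
    unfolding gF_def using fin w by (simp add: sum_diff1)
  also have "(\<Sum>u\<in>V-{w}. if {u,w} \<in> E then H \<tau> u (deg V E u) - H \<tau> u (deg V E u - 1) else 0)
     = (\<Sum>u\<in>V. if {u,w} \<in> E then H \<tau> u (deg V E u) - H \<tau> u (deg V E u - 1) else 0)"
    using fin w nl by (simp add: sum_diff1)
  finally show ?thesis by simp
qed

lemma exists_good:
  assumes fin: "finite V" and nl: "\<And>u. {u,u} \<notin> E" and ne: "V \<noteq> {}"
  shows "\<exists>w\<in>V. gF (V - {w}) E \<tau> + (if \<tau> w > deg V E w then 1 else 0) \<le> gF V E \<tau>"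
proof (rule ccontr)
  assume "\<not> ?thesis"
  then have neg: "\<forall>w\<in>V. gF V E \<tau> - gF (V - {w}) E \<tau> - (if \<tau> w > deg V E w then 1 else 0) < 0"
    by force
  let ?d = "\<lambda>u. H \<tau> u (deg V E u) - H \<tau> u (deg V E u - 1)"
  have "(\<Sum>w\<in>V. gF V E \<tau> - gF (V - {w}) E \<tau> - (if \<tau> w > deg V E w then 1 else 0))
     = (\<Sum>w\<in>V. H \<tau> w (deg V E w) + (\<Sum>u\<in>V. if {u,w} \<in> E then ?d u else 0)
          - (if \<tau> w > deg V E w then 1 else 0))"
    by (rule sum.cong) (auto simp: gF_remove[OF fin nl])
  also have "\<dots> = (\<Sum>w\<in>V. H \<tau> w (deg V E w)) + (\<Sum>w\<in>V. \<Sum>u\<in>V. if {u,w} \<in> E then ?d u else 0)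
          - (\<Sum>w\<in>V. (if \<tau> w > deg V E w then 1 else 0))"
    by (simp add: sum.distrib sum_subtractf)
  also have "(\<Sum>w\<in>V. \<Sum>u\<in>V. if {u,w} \<in> E then ?d u else 0) = (\<Sum>u\<in>V. real (deg V E u) * ?d u)"
  proof -
    have "(\<Sum>w\<in>V. \<Sum>u\<in>V. if {u,w} \<in> E then ?d u else 0) = (\<Sum>u\<in>V. \<Sum>w\<in>V. if {u,w} \<in> E then ?d u else 0)"
      by (rule sum.swap)
    also have "\<dots> = (\<Sum>u\<in>V. real (deg V E u) * ?d u)"
    proof (rule sum.cong)
      fix u assume "u \<in> V"
      have "(\<Sum>w\<in>V. if {u,w} \<in> E then ?d u else 0) = (\<Sum>w\<in>{w\<in>V. {u,w} \<in> E}. ?d u)"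
        using fin by (simp add: sum.inter_filter[symmetric])
      also have "\<dots> = real (deg V E u) * ?d u" by (simp add: deg_def nbrs_iff)
      finally show "(\<Sum>w\<in>V. if {u,w} \<in> E then ?d u else 0) = real (deg V E u) * ?d u" .
    qed simp
    finally show ?thesis .
  qed
  also have "(\<Sum>w\<in>V. H \<tau> w (deg V E w)) + (\<Sum>u\<in>V. real (deg V E u) * ?d u)
       - (\<Sum>w\<in>V. (if \<tau> w > deg V E w then 1 else 0)) = 0"
    using H_point[of \<tau>] by (simp add: sum.distrib[symmetric] sum_subtractf[symmetric])
  finally have "(\<Sum>w\<in>V. gF V E \<tau> - gF (V - {w}) E \<tau> - (if \<tau> w > deg V E w then 1 else 0)) = 0" .
  moreover have "(\<Sum>w\<in>V. gF V E \<tau> - gF (V - {w}) E \<tau> - (if \<tau> w > deg V E w then 1 else 0)) < 0"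
  proof -
    have "(\<Sum>w\<in>V. gF V E \<tau> - gF (V - {w}) E \<tau> - (if \<tau> w > deg V E w then 1 else 0)) < (\<Sum>w\<in>V. (0::real))"
      by (rule sum_strict_mono[OF fin ne]) (use neg in blast)
    then show ?thesis by simp
  qed
  ultimately show False by simp
qed

lemma dynamo_bound:
  assumes "finite V" and nl: "\<And>u. {u,u} \<notin> E"
  shows "\<exists>D. is_dynamo V E \<tau> D \<and> real (card D) \<le> gF V E \<tau>"
  using assms(1)
proof (induction "card V" arbitrary: V rule: less_induct)
  case less
  show ?case
  proof (cases "V = {}")
    case True
    then show ?thesis by (auto simp: is_dynamo_def gF_def intro!: exI[of _ 0])
  next
    case False
    obtain w where w: "w \<in> V"
      and g: "gF (V - {w}) E \<tau> + (if \<tau> w > deg V E w then 1 else 0) \<le> gF V E \<tau>"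
      using exists_good[OF less.prems nl False] by blast
    have "card (V - {w}) < card V" using w less.prems by (meson card_Diff1_less)
    then obtain D' where D': "is_dynamo (V - {w}) E \<tau> D'" "real (card D') \<le> gF (V - {w}) E \<tau>"
      using less.hyps less.prems by blast
    show ?thesis
    proof (cases "\<tau> w \<le> deg V E w")
      case True
      then show ?thesis using extend_dynamo(2)[OF less.prems nl w D'(1)] D'(2) g by auto
    next
      case False
      have "finite D'" using D'(1) less.prems by (auto simp: is_dynamo_def finite_subset)
      then have "card (insert w D') \<le> card D' + 1" by (simp add: card_insert_if)
      then show ?thesis using extend_dynamo(1)[OF less.prems nl w D'(1)] D'(2) g False
        by (intro exI[of _ "insert w D'"]) auto
    qed
  qed
qed



lemma tangent:
  fixes x c :: real assumes "x \<ge> 0" "c > 0"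
  shows "x / (x+1) \<le> c/(c+1) + (x-c)/(c+1)^2"
proof -
  have cp: "(c+1)^2 > 0" using assms by simp
  have e: "c/(c+1) + (x-c)/(c+1)^2 = (c^2+x)/(c+1)^2"
  proof -
    have "c/(c+1) = (c*(c+1))/(c+1)^2" using assms by (simp add: power2_eq_square)
    then have "c/(c+1) + (x-c)/(c+1)^2 = (c*(c+1) + (x-c))/(c+1)^2" by (simp add: add_divide_distrib)
    also have "c*(c+1) + (x-c) = c^2+x" by (simp add: power2_eq_square algebra_simps)
    finally show ?thesis .
  qed
  have "x * (c+1)^2 \<le> (c^2+x)*(x+1)"
  proof -
    have "(c^2+x)*(x+1) - x * (c+1)^2 = (x-c)^2" by (simp add: power2_eq_square algebra_simps)
    then show ?thesis by (smt (verit) zero_le_power2)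
  qed
  then have "x / (x+1) \<le> (c^2+x)/(c+1)^2" using assms cp
    by (simp add: divide_le_eq le_divide_eq mult.commute)
  then show ?thesis using e by simp
qed

lemma dyn_le:
  assumes "is_dynamo V E \<tau> D" "finite V"
  shows "dyn V E \<tau> \<le> card D"
proof -
  have "{card D |D. is_dynamo V E \<tau> D} \<subseteq> card ` Pow V" by (auto simp: is_dynamo_def)
  then have "finite {card D |D. is_dynamo V E \<tau> D}" using assms(2) by (meson finite_subset finite_imageI finite_Pow_iff)
  then show ?thesis unfolding dyn_def using assms(1) by (intro Min_le) auto
qed

lemma card_E:
  assumes "simple_graph V E"
  shows "card E \<le> card V * card V - card V"
proof -
  have fin: "finite V" using assms by (simp add: simple_graph_def)
  let ?P = "V \<times> V - (\<lambda>u. (u,u)) ` V"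
  have "E \<subseteq> (\<lambda>(u,v). {u,v}) ` ?P"
  proof
    fix e assume "e \<in> E"
    then obtain u v where "u \<in> V" "v \<in> V" "u \<noteq> v" "e = {u,v}"
      using assms unfolding simple_graph_def by blast
    then show "e \<in> (\<lambda>(u,v). {u,v}) ` ?P" by (intro image_eqI[of _ _ "(u,v)"]) auto
  qed
  then have "card E \<le> card ?P" using fin by (meson card_image_le card_mono finite_Diff finite_SigmaI finite_imageI order_trans)
  also have "card ?P = card V * card V - card V"
    using fin by (subst card_Diff_subset) (auto simp: card_image inj_on_def card_cartesian_product)
  finally show ?thesis .
qed

theorem proposition4:
  fixes V :: "'a set" and E :: "'a set set" and c t :: real
  assumes "simple_graph V E"
    and "c > 0" and "t > 0"
    and "t \<le> c * eps V E / real (card V)"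
  shows "real (Ldyn V E t) < c / (c + 1) * real (card V)"
proof -
  have fin: "finite V" using assms(1) by (simp add: simple_graph_def)
  have nl: "\<And>u. {u,u} \<notin> E" using assms(1) unfolding simple_graph_def by (metis doubleton_eq_iff)
  define N where "N = card V"
  have Npos: "N > 0"
  proof (rule ccontr)
    assume "\<not> N > 0" then have "N = 0" by simp
    then show False using assms(3,4) by (simp add: N_def eps_def)
  qed
  have mE: "real (card E) \<le> real N * real N - real N"
    using card_E[OF assms(1)] Npos unfolding N_def[symmetric]
    by (metis of_nat_diff of_nat_le_iff of_nat_mult le_square)
  have tN: "t * real N < c * real N"
  proof -
    have "t * real N \<le> c * eps V E" using assms(4) Npos by (simp add: N_def field_simps)
    also have "eps V E \<le> real N - 1" using mE Npos by (simp add: eps_def N_def[symmetric] field_simps)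
    then have "c * eps V E \<le> c * (real N - 1)" using assms(2) by simp
    finally show ?thesis using assms(2) by (simp add: algebra_simps)
  qed
  let ?S = "{dyn V E \<tau> | \<tau>. (\<forall>v\<in>V. \<tau> v \<le> deg V E v) \<and>
                      (\<Sum>v\<in>V. real (\<tau> v)) / real (card V) \<le> t}"
  have bound: "real x < c / (c + 1) * real N" if "x \<in> ?S" for x
  proof -
    obtain \<tau> where x: "x = dyn V E \<tau>" and td: "\<forall>v\<in>V. \<tau> v \<le> deg V E v"
      and avg: "(\<Sum>v\<in>V. real (\<tau> v)) / real N \<le> t" using \<open>x \<in> ?S\<close> N_def by auto
    have "(\<Sum>v\<in>V. real (\<tau> v)) \<le> t * real N"
      using avg Npos by (simp add: divide_le_eq)
    then have Ssum: "(\<Sum>v\<in>V. real (\<tau> v)) < c * real N"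
      using tN by linarith
    obtain D where D: "is_dynamo V E \<tau> D" "real (card D) \<le> gF V E \<tau>"
      using dynamo_bound[OF fin nl] by blast
    have "real x \<le> real (card D)" using dyn_le[OF D(1) fin] x by simp
    also have "\<dots> \<le> gF V E \<tau>" by fact
    also have "gF V E \<tau> \<le> (\<Sum>v\<in>V. c/(c+1) + (real (\<tau> v) - c)/(c+1)^2)"
      unfolding gF_def
    proof (rule sum_mono)
      fix v assume "v \<in> V"
      then have tv: "\<tau> v \<le> deg V E v" using td by auto
      then have "H \<tau> v (deg V E v) = real (\<tau> v) / (real (deg V E v) + 1)" by (simp add: H_def)
      also have "\<dots> \<le> real (\<tau> v) / (real (\<tau> v) + 1)"
        using tv by (intro divide_left_mono) auto
      also have "\<dots> \<le> c/(c+1) + (real (\<tau> v) - c)/(c+1)^2"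
        using tangent assms(2) by simp
      finally show "H \<tau> v (deg V E v) \<le> c/(c+1) + (real (\<tau> v) - c)/(c+1)^2" .
    qed
    also have "\<dots> = real N * (c/(c+1)) + ((\<Sum>v\<in>V. real (\<tau> v)) - real N * c)/(c+1)^2"
      by (simp add: sum.distrib sum_subtractf sum_divide_distrib[symmetric] N_def)
    also have "\<dots> < real N * (c/(c+1))"
    proof -
      have "((\<Sum>v\<in>V. real (\<tau> v)) - real N * c)/(c+1)^2 < 0"
        using Ssum assms(2) by (intro divide_neg_pos) (auto simp: mult.commute)
      then show ?thesis by simp
    qed
    finally show ?thesis by (simp add: mult.commute)
  qed
  have ne: "dyn V E (\<lambda>_. 0) \<in> ?S"
  proof -
    have "(\<forall>v\<in>V. ((\<lambda>_. 0::nat) v) \<le> deg V E v) \<and>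
        (\<Sum>v\<in>V. real ((\<lambda>_. 0::nat) v)) / real (card V) \<le> t" using assms(3) by simp
    then show ?thesis by blast
  qed
  have "?S \<subseteq> {..card V}"
  proof
    fix x assume "x \<in> ?S"
    then obtain \<tau> where "x = dyn V E \<tau>" by auto
    moreover have "is_dynamo V E \<tau> V" unfolding is_dynamo_def
      by (auto intro: exI[of _ 0])
    ultimately show "x \<in> {..card V}" using dyn_le[OF _ fin] by auto
  qed
  then have "finite ?S" using finite_subset by blast
  then have "Ldyn V E t \<in> ?S" unfolding Ldyn_def using ne by (intro Max_in) auto
  then show ?thesis using bound N_def by simp
qed

end
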